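(* Let $\mathcal{A}$ be a complex Banach algebra with unity and let $a\in\mathcal{A}$. If $x\in\mathcal{A}$ is a g$\pi$-Hirano inverse of $a$, then $a$ is generalized Drazin invertible and its generalized Drazin inverse is $a^{d}=x$.
   Context: An element $q\in\mathcal{A}$ is quasinilpotent if its spectrum is $\sigma(q)=\{0\}$; $\mathcal{A}^{qnil}$ denotes the set of quasinilpotent elements. An element $x\in\mathcal{A}$ is a generalized Drazin inverse of $a$ if $xax=x$, $ax=xa$ and $a-a^{2}x\in\mathcal{A}^{qnil}$; it is unique when it exists and is denoted $a^{d}$. An element $x\in\mathcal{A}$ is a g$\pi$-Hirano inverse of $a$ if $xax=x$, $ax=xa$ and $a-a^{n+2}x\in\mathcal{A}^{qnil}$ for some positive integer $n$. *)

theory Defs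
  imports "HOL-Analysis.Analysis"
begin

class complex_banach_algebra_1 = real_normed_algebra_1 + banach +
  fixes scaleC :: "complex \<Rightarrow> 'a \<Rightarrow> 'a"
  assumes scaleC_add_right: "scaleC c (x + y) = scaleC c x + scaleC c y"
    and scaleC_add_left: "scaleC (c + d) x = scaleC c x + scaleC d x"
    and scaleC_scaleC: "scaleC c (scaleC d x) = scaleC (c * d) x"
    and scaleC_one: "scaleC 1 x = x"
    and scaleR_scaleC: "scaleR r x = scaleC (complex_of_real r) x"
    and mult_scaleC_left: "scaleC c x * y = scaleC c (x * y)"
    and mult_scaleC_right: "x * scaleC c y = scaleC c (x * y)"
    and norm_scaleC: "norm (scaleC c x) = cmod c * norm x"

definition invertible_elem :: "'a::monoid_mult \<Rightarrow> bool" where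
  "invertible_elem x \<longleftrightarrow> (\<exists>y. x * y = 1 \<and> y * x = 1)"

definition spectrum :: "'a::complex_banach_algebra_1 \<Rightarrow> complex set" where
  "spectrum a = {z. \<not> invertible_elem (a - scaleC z 1)}"

definition quasinilpotent :: "'a::complex_banach_algebra_1 \<Rightarrow> bool" where
  "quasinilpotent q \<longleftrightarrow> spectrum q = {0}"

definition is_gd_inverse :: "'a::complex_banach_algebra_1 \<Rightarrow> 'a \<Rightarrow> bool" where
  "is_gd_inverse a x \<longleftrightarrow> x * a * x = x \<and> a * x = x * a \<and> quasinilpotent (a - a^2 * x)"

definition gd_invertible :: "'a::complex_banach_algebra_1 \<Rightarrow> bool" where
  "gd_invertible a \<longleftrightarrow> (\<exists>x. is_gd_inverse a x)"

definition gd_inverse :: "'a::complex_banach_algebra_1 \<Rightarrow> 'a" where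
  "gd_inverse a = (THE x. is_gd_inverse a x)"

definition is_gpi_hirano_inverse :: "'a::complex_banach_algebra_1 \<Rightarrow> 'a \<Rightarrow> bool" where
  "is_gpi_hirano_inverse a x \<longleftrightarrow> x * a * x = x \<and> a * x = x * a \<and>
     (\<exists>n::nat. n \<ge> 1 \<and> quasinilpotent (a - a^(n+2) * x))"

end

theory Submission
  imports Defs
begin

lemma scaleC_zero_left [simp]: "scaleC 0 (x::'a::complex_banach_algebra_1) = 0"
proof -
  have "scaleC 0 x = scaleC 0 x + scaleC 0 x" using scaleC_add_left[of 0 0 x] by simp
  then show ?thesis by simp
qed

lemma scaleC_minus_left: "scaleC (-c) (x::'a::complex_banach_algebra_1) = - scaleC c x"
proof -
  have "scaleC (-c) x + scaleC c x = 0" using scaleC_add_left[of "-c" c x] by simp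
  then show ?thesis by (simp add: eq_neg_iff_add_eq_0)
qed

lemma cs_left: "scaleC c 1 * (y::'a::complex_banach_algebra_1) = scaleC c y"
  by (simp add: mult_scaleC_left)
lemma cs_right: "(y::'a::complex_banach_algebra_1) * scaleC c 1 = scaleC c y"
  by (simp add: mult_scaleC_right)
lemma cs_comm: "scaleC c 1 * (y::'a::complex_banach_algebra_1) = y * scaleC c 1"
  by (simp add: cs_left cs_right)
lemma cs_mult: "scaleC (c*d) (1::'a::complex_banach_algebra_1) = scaleC c 1 * scaleC d 1"
  by (simp add: cs_left scaleC_scaleC)
lemma cs_add: "scaleC (c+d) (1::'a::complex_banach_algebra_1) = scaleC c 1 + scaleC d 1"
  by (simp add: scaleC_add_left)
lemma cs_one [simp]: "scaleC 1 (1::'a::complex_banach_algebra_1) = 1"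
  by (simp add: scaleC_one)
lemma norm_cs: "norm (scaleC c (1::'a::complex_banach_algebra_1)) = cmod c"
  by (simp add: norm_scaleC)
lemma cs_of_real: "scaleC (complex_of_real r) (1::'a::complex_banach_algebra_1) = of_real r"
  by (simp add: of_real_def scaleR_scaleC)
lemma cs_inv: "c \<noteq> 0 \<Longrightarrow> scaleC c 1 * scaleC (inverse c) (1::'a::complex_banach_algebra_1) = 1"
  by (simp flip: cs_mult)
lemma cs_power: "scaleC (c^n) (1::'a::complex_banach_algebra_1) = (scaleC c 1)^n"
  by (induction n) (simp_all add: cs_mult)

lemma inv_mult: "invertible_elem (u::'a::monoid_mult) \<Longrightarrow> invertible_elem v \<Longrightarrow> invertible_elem (u * v)"
  unfolding invertible_elem_def
proof (elim exE conjE)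
  fix u' v' assume h: "u * u' = 1" "u' * u = 1" "v * v' = 1" "v' * v = 1"
  have "u * v * (v' * u') = 1" by (metis h(1) h(3) mult.assoc mult_1_left)
  moreover have "(v' * u') * (u * v) = 1" by (metis h(2) h(4) mult.assoc mult_1_left)
  ultimately show "\<exists>y. u * v * y = 1 \<and> y * (u * v) = 1" by blast
qed

lemma inv_cs: "c \<noteq> 0 \<Longrightarrow> invertible_elem (scaleC c (1::'a::complex_banach_algebra_1))"
  unfolding invertible_elem_def using cs_inv[of c] cs_comm[of c] by metis

lemma qn_D1: "quasinilpotent (N::'a::complex_banach_algebra_1) \<Longrightarrow> z \<noteq> 0 \<Longrightarrow> invertible_elem (N - scaleC z 1)"
  unfolding quasinilpotent_def spectrum_def by auto
lemma qn_D2: "quasinilpotent (N::'a::complex_banach_algebra_1) \<Longrightarrow> \<not> invertible_elem N"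
  unfolding quasinilpotent_def spectrum_def by (metis (mono_tags) diff_zero insertI1 mem_Collect_eq scaleC_zero_left)

lemma qn_inv: "quasinilpotent (N::'a::complex_banach_algebra_1) \<Longrightarrow> invertible_elem (1 - scaleC z 1 * N)"
proof (cases "z = 0")
  case True then show ?thesis by (simp add: invertible_elem_def)
next
  case False
  assume q: "quasinilpotent N"
  have "1 - scaleC z 1 * N = scaleC (-z) 1 * (N - scaleC (inverse z) 1)"
    using False by (simp add: algebra_simps scaleC_minus_left cs_mult[symmetric])
  moreover have "invertible_elem (scaleC (-z) (1::'a))" using False by (intro inv_cs) simp
  ultimately show ?thesis using inv_mult qn_D1[OF q] False by (metis inverse_nonzero_iff_nonzero)
qed

definition cinv :: "'a::monoid_mult \<Rightarrow> 'a" where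
  "cinv u = (SOME v. u * v = 1 \<and> v * u = 1)"

lemma cinv: "invertible_elem u \<Longrightarrow> u * cinv u = 1 \<and> cinv u * u = 1"
  unfolding invertible_elem_def cinv_def by (rule someI_ex)

definition R :: "'a::complex_banach_algebra_1 \<Rightarrow> complex \<Rightarrow> 'a" where
  "R N z = cinv (1 - scaleC z 1 * N)"

lemma R_left: "quasinilpotent N \<Longrightarrow> R N z * (1 - scaleC z 1 * N) = 1"
  unfolding R_def using cinv qn_inv by blast
lemma R_right: "quasinilpotent N \<Longrightarrow> (1 - scaleC z 1 * N) * R N z = 1"
  unfolding R_def using cinv qn_inv by blast

lemma R_diff:
  assumes q: "quasinilpotent N"
  shows "R N w - R N z = R N z * (scaleC (w - z) 1 * N) * R N w"
proof -
  have e0: "scaleC (w - z) 1 = scaleC w 1 - (scaleC z 1::'a)"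
    by (metis cs_add diff_add_cancel eq_diff_eq)
  have e: "scaleC (w - z) 1 * N = (1 - scaleC z 1 * N) - (1 - scaleC w 1 * N)"
    unfolding e0 by (simp add: algebra_simps)
  have "R N z * (scaleC (w - z) 1 * N) * R N w
     = R N z * (1 - scaleC z 1 * N) * R N w - R N z * ((1 - scaleC w 1 * N) * R N w)"
    unfolding e by (simp only: right_diff_distrib left_diff_distrib mult.assoc)
  also have "\<dots> = R N w - R N z" by (simp only: R_left[OF q] R_right[OF q] mult_1_left mult_1_right)
  finally show ?thesis by simp
qed

lemma norm_csm: "norm (scaleC c 1 * (y::'a::complex_banach_algebra_1)) = cmod c * norm y"
  by (simp add: cs_left norm_scaleC)

lemma norm3: "norm ((A::'a::real_normed_algebra) * B * C) \<le> norm A * norm B * norm C"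
proof -
  have "norm (A*B*C) \<le> norm (A*B) * norm C" by (rule norm_mult_ineq)
  also have "\<dots> \<le> norm A * norm B * norm C" by (intro mult_right_mono norm_mult_ineq norm_ge_zero)
  finally show ?thesis .
qed

lemma R_diff_norm:
  assumes q: "quasinilpotent N"
  shows "norm (R N w - R N z) \<le> cmod (w - z) * norm N * norm (R N z) * norm (R N w)"
proof -
  have "norm (R N w - R N z) \<le> norm (R N z) * norm (scaleC (w - z) 1 * N) * norm (R N w)"
    unfolding R_diff[OF q] by (rule norm3)
  then show ?thesis by (simp add: norm_csm mult_ac)
qed

lemma R_local:
  assumes q: "quasinilpotent N" and h: "cmod (w - z) * norm N * norm (R N z) \<le> 1/2"
  shows "norm (R N w) \<le> 2 * norm (R N z)"
proof -
  have "norm (R N w) \<le> norm (R N z) + norm (R N w - R N z)"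
    by (metis add.commute diff_add_cancel norm_triangle_ineq)
  also have "\<dots> \<le> norm (R N z) + cmod (w - z) * norm N * norm (R N z) * norm (R N w)"
    using R_diff_norm[OF q, of w z] by (rule add_left_mono)
  also have "\<dots> \<le> norm (R N z) + 1/2 * norm (R N w)"
    using mult_right_mono[OF h norm_ge_zero, of "R N w"] by (rule add_left_mono)
  finally show ?thesis by linarith
qed

lemma R_cont:
  assumes q: "quasinilpotent N"
  shows "isCont (R N) z"
  unfolding continuous_at_eps_delta
proof (intro allI impI)
  fix e :: real assume e: "e > 0"
  define n where "n = norm N"
  define r where "r = norm (R N z)"
  define K where "K = (n + 1) * (r + 1)"
  have n0: "n \<ge> 0" and r0: "r \<ge> 0" unfolding n_def r_def by simp_all
  have K1: "K \<ge> 1" unfolding K_def using mult_mono[of 1 "n+1" 1 "r+1"] n0 r0 by simp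
  have Knr: "n * r \<le> K" unfolding K_def using n0 r0 by (simp add: algebra_simps)
  define d where "d = min (1/(2*K)) (e/(2*K*(r+1)))"
  have d0: "d > 0" unfolding d_def using K1 e r0 by simp
  show "\<exists>d>0. \<forall>w. dist w z < d \<longrightarrow> dist (R N w) (R N z) < e"
  proof (intro exI[of _ d] conjI allI impI d0)
    fix w assume "dist w z < d"
    then have a: "cmod (w - z) < d" by (simp add: dist_norm)
    define a where "a = cmod (w - z)"
    define s where "s = norm (R N w)"
    have a0: "a \<ge> 0" and s0: "s \<ge> 0" unfolding a_def s_def by simp_all
    have ad: "a < d" using a unfolding a_def .
    have "a * n * r \<le> a * K" using Knr a0 by (simp add: mult.assoc mult_left_mono)
    also have "\<dots> \<le> d * K" using ad K1 by (simp add: mult_right_mono)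
    also have "\<dots> \<le> 1/2" unfolding d_def using K1 by (simp add: min_def field_simps)
    finally have h: "a * n * r \<le> 1/2" .
    have s2: "s \<le> 2 * (r + 1)" using R_local[OF q, of w z] h unfolding a_def n_def r_def s_def by simp
    have "dist (R N w) (R N z) \<le> a * n * r * s" using R_diff_norm[OF q, of w z]
      unfolding a_def n_def r_def s_def by (simp add: dist_norm)
    also have "\<dots> = a * ((n * r) * s)" by (simp add: mult_ac)
    also have "\<dots> \<le> a * (K * (2 * (r + 1)))"
      by (intro mult_left_mono mult_mono Knr s2 a0) (use K1 n0 r0 s0 in auto)
    also have "\<dots> < d * (K * (2 * (r + 1)))"
      using ad K1 r0 by (intro mult_strict_right_mono) auto
    also have "\<dots> \<le> e/(2*K*(r+1)) * (K * (2 * (r + 1)))"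
      using K1 r0 by (intro mult_right_mono) (auto simp: d_def)
    also have "\<dots> = e/(2*K*(r+1)) * (2*K*(r+1))" by (simp add: mult_ac)
    also have "\<dots> = e" proof -
      have "2*K*(r+1) \<noteq> 0" using K1 r0 by simp
      then show ?thesis by simp
    qed
    finally show "dist (R N w) (R N z) < e" .
  qed
qed

lemma R_bounded:
  assumes q: "quasinilpotent N"
  shows "\<exists>M. \<forall>z. cmod z \<le> rr \<longrightarrow> norm (R N z) \<le> M"
proof -
  have "continuous_on (cball 0 rr) (R N)"
    using R_cont[OF q] by (simp add: continuous_at_imp_continuous_on)
  then have "compact (R N ` cball 0 rr)" by (intro compact_continuous_image compact_cball)
  then have "bounded (R N ` cball 0 rr)" by (rule compact_imp_bounded)
  then obtain M where "\<forall>y\<in>R N ` cball 0 rr. norm y \<le> M" by (auto simp: bounded_iff)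
  then have "\<forall>z. cmod z \<le> rr \<longrightarrow> norm (R N z) \<le> M" by (simp add: mem_cball_0)
  then show ?thesis by blast
qed

definition zeta :: "nat \<Rightarrow> complex" where "zeta m = exp (\<i> * of_real (pi / 2^m))"
lemma zeta_pow: "zeta m ^ (2^m) = -1"
proof -
  have "zeta m ^ (2^m) = exp (of_nat (2^m) * (\<i> * of_real (pi / 2^m)))"
    unfolding zeta_def by (rule exp_of_nat_mult[symmetric])
  also have "of_nat (2^m) * (\<i> * of_real (pi / 2^m)) = of_real pi * \<i>" by simp
  finally show ?thesis by (simp add: exp_pi_i)
qed
lemma zeta_norm [simp]: "cmod (zeta m) = 1" unfolding zeta_def by (rule norm_exp_i_times)

fun S :: "'a::complex_banach_algebra_1 \<Rightarrow> nat \<Rightarrow> complex \<Rightarrow> 'a" where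
  "S N 0 z = R N z"
| "S N (Suc m) z = scaleC (1/2) 1 * (S N m z + S N m (zeta m * z))"

lemma half_two: "scaleC (1/2) 1 * (1 + 1) = (1::'a::complex_banach_algebra_1)"
proof -
  have "scaleC (1/2) 1 * (1 + 1) = scaleC (1/2) 1 + (scaleC (1/2) 1 :: 'a)" by (simp only: distrib_left mult_1_right)
  also have "\<dots> = scaleC (1/2 + 1/2) 1" by (simp only: cs_add)
  finally show ?thesis by simp
qed

lemma S_left:
  assumes q: "quasinilpotent N"
  shows "S N m z * (1 - scaleC (z^(2^m)) 1 * N^(2^m)) = 1"
proof (induction m arbitrary: z)
  case 0
  then show ?case using R_left[OF q] by simp
next
  case (Suc m)
  define c where "c = z^(2^m)"
  define X where "X = scaleC c 1 * N^(2^m)"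
  have IH1: "S N m z * (1 - X) = 1" using Suc[of z] unfolding X_def c_def .
  have zc: "(zeta m * z)^(2^m) = - c" unfolding c_def by (simp add: power_mult_distrib zeta_pow)
  have IH2: "S N m (zeta m * z) * (1 + X) = 1"
    using Suc[of "zeta m * z"] unfolding zc X_def by (simp add: scaleC_minus_left)
  have p2: "(2::nat)^(Suc m) = 2^m + 2^m" by simp
  have XX: "scaleC (z^(2^Suc m)) 1 * N^(2^Suc m) = X * X"
  proof -
    have "z^(2^Suc m) = c * c" unfolding c_def p2 power_add ..
    then have "scaleC (z^(2^Suc m)) 1 * N^(2^Suc m) = scaleC c 1 * scaleC c 1 * (N^(2^m) * N^(2^m))"
      by (simp only: cs_mult p2 power_add)
    also have "\<dots> = scaleC c 1 * (N^(2^m) * scaleC c 1) * N^(2^m)"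
      by (simp only: cs_comm[of c "N^(2^m)", symmetric] mult.assoc)
    also have "\<dots> = X * X" unfolding X_def by (simp add: mult.assoc)
    finally show ?thesis .
  qed
  have f1: "1 - X * X = (1 - X) * (1 + X)" by (simp add: algebra_simps)
  have f2: "1 - X * X = (1 + X) * (1 - X)" by (simp add: algebra_simps)
  have "S N (Suc m) z * (1 - X * X)
      = scaleC (1/2) 1 * (S N m z * (1 - X * X) + S N m (zeta m * z) * (1 - X * X))"
    by (simp only: S.simps distrib_right mult.assoc)
  also have "\<dots> = scaleC (1/2) 1 * (S N m z * ((1 - X) * (1 + X)) + S N m (zeta m * z) * ((1 + X) * (1 - X)))"
    by (simp only: f1[symmetric] f2[symmetric])
  also have "\<dots> = scaleC (1/2) 1 * ((1 + X) + (1 - X))"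
    by (simp only: mult.assoc[symmetric] IH1 IH2 mult_1_left)
  also have "\<dots> = 1" using half_two by simp
  finally show ?case unfolding XX .
qed

lemma norm_half: "norm (scaleC (1/2) 1 * (y::'a::complex_banach_algebra_1)) = norm y / 2"
  by (simp add: norm_csm)

lemma S_lip:
  assumes h: "\<forall>w. cmod w = r \<longrightarrow> norm (R N w - R N (t*w)) \<le> \<epsilon>"
  shows "cmod z = r \<Longrightarrow> norm (S N m z - S N m (t*z)) \<le> \<epsilon>"
proof (induction m arbitrary: z)
  case 0
  then show ?case using h by simp
next
  case (Suc m)
  have e: "zeta m * (t * z) = t * (zeta m * z)" by (simp add: mult_ac)
  have "S N (Suc m) z - S N (Suc m) (t*z) = scaleC (1/2) 1 * ((S N m z - S N m (t*z)) + (S N m (zeta m * z) - S N m (t * (zeta m * z))))"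
    by (simp add: e algebra_simps)
  also have "norm \<dots> \<le> (\<epsilon> + \<epsilon>) / 2"
    unfolding norm_half
  proof -
    have a: "norm (S N m z - S N m (t*z)) \<le> \<epsilon>" using Suc by blast
    have b: "norm (S N m (zeta m * z) - S N m (t * (zeta m * z))) \<le> \<epsilon>"
      using Suc.IH[of "zeta m * z"] Suc.prems by (simp add: norm_mult)
    show "norm ((S N m z - S N m (t*z)) + (S N m (zeta m * z) - S N m (t * (zeta m * z)))) / 2 \<le> (\<epsilon> + \<epsilon>) / 2"
      using norm_triangle_le[OF add_mono[OF a b]] by (simp add: divide_right_mono)
  qed
  finally show ?case by simp
qed

lemma linv_small:
  fixes S W :: "'a::real_normed_algebra_1"
  assumes h: "S * (1 - W) = 1" and w: "norm W \<le> 1/16"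
  shows "norm (S - 1) \<le> 1/8"
proof -
  have e: "S - 1 = S * W" using h by (simp add: algebra_simps)
  have n1: "norm (S * W) \<le> norm S * (1/16)"
    using norm_mult_ineq[of S W] mult_left_mono[OF w norm_ge_zero[of S]] by linarith
  have "norm S \<le> norm (1::'a) + norm (S - 1)" by (metis add.commute diff_add_cancel norm_triangle_ineq)
  then have "norm S \<le> 1 + norm S * (1/16)" using e n1 by simp
  then have "norm S \<le> 16/15" by linarith
  moreover have "norm (S - 1) = norm (S * W)" using e by simp
  ultimately show ?thesis using n1 by linarith
qed

lemma linv_T:
  fixes S T :: "'a::real_normed_algebra_1"
  assumes h: "S * (1 - T) = 1" and y: "norm (S - 1) \<le> 1/4"
  shows "norm T \<le> 1/3"
proof -
  have e: "T = (S - 1) - (S - 1) * T"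
  proof -
    have "S * T = S - 1" using h by (simp add: algebra_simps)
    then show ?thesis by (simp add: algebra_simps)
  qed
  have n1: "norm ((S - 1) * T) \<le> 1/4 * norm T"
    using norm_mult_ineq[of "S - 1" T] mult_right_mono[OF y norm_ge_zero[of T]] by linarith
  have "norm T \<le> norm (S - 1) + norm ((S - 1) * T)"
    using norm_triangle_ineq4[of "S - 1" "(S - 1) * T"] e by simp
  then show ?thesis using y n1 by linarith
qed

lemma pow2_small:
  fixes q :: real
  assumes "0 \<le> q" "q < 1" "\<epsilon> > 0"
  shows "\<exists>m1. \<forall>m\<ge>m1. q^(2^m) < \<epsilon>"
proof -
  have "(\<lambda>m. q^m) \<longlonglongrightarrow> 0" using assms by (intro LIMSEQ_power_zero) simp
  then have "eventually (\<lambda>m. q^m < \<epsilon>) sequentially" using assms(3) by (rule order_tendstoD)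
  then obtain m1 where m1: "\<forall>m\<ge>m1. q^m < \<epsilon>" by (auto simp: eventually_sequentially)
  have "\<forall>m\<ge>m1. q^(2^m) < \<epsilon>"
  proof (intro allI impI)
    fix m assume "m \<ge> m1"
    have "q^(2^m) \<le> q^m" using assms by (intro power_decreasing) (simp_all add: less_exp less_imp_le)
    then show "q^(2^m) < \<epsilon>" using m1 \<open>m \<ge> m1\<close> by fastforce
  qed
  then show ?thesis by blast
qed

lemma norm_p1: "0 < norm (y::'b::real_normed_vector) + 1" by (smt (verit) norm_ge_zero)

definition good :: "'a::complex_banach_algebra_1 \<Rightarrow> real \<Rightarrow> bool" where
  "good N \<rho> \<longleftrightarrow> (\<exists>C>0. \<exists>m0. \<forall>m\<ge>m0. \<rho>^(2^m) * norm (N^(2^m)) \<le> C)"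

lemma good_mono:
  assumes "good N \<rho>" "0 \<le> \<rho>'" "\<rho>' \<le> \<rho>"
  shows "good N \<rho>'"
proof -
  obtain C m0 where C: "C > 0" "\<forall>m\<ge>m0. \<rho>^(2^m) * norm (N^(2^m)) \<le> C"
    using assms(1) unfolding good_def by blast
  have "\<forall>m\<ge>m0. \<rho>'^(2^m) * norm (N^(2^m)) \<le> C"
  proof (intro allI impI)
    fix m assume "m \<ge> m0"
    have "\<rho>'^(2^m) * norm (N^(2^m)) \<le> \<rho>^(2^m) * norm (N^(2^m))"
      using assms by (intro mult_right_mono power_mono) auto
    then show "\<rho>'^(2^m) * norm (N^(2^m)) \<le> C" using C \<open>m \<ge> m0\<close> by fastforce
  qed
  then show ?thesis using C unfolding good_def by blast
qed

lemma good_init: "good N (1 / (norm N + 1))"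
proof -
  define \<rho> where "\<rho> = 1 / (norm N + 1)"
  have r0: "\<rho> \<ge> 0" unfolding \<rho>_def by simp
  have r1: "\<rho> * norm N \<le> 1" unfolding \<rho>_def using norm_p1[of N] by (simp add: field_simps)
  have "\<forall>m\<ge>0. \<rho>^(2^m) * norm (N^(2^m)) \<le> 1"
  proof (intro allI impI)
    fix m :: nat
    have "\<rho>^(2^m) * norm (N^(2^m)) \<le> \<rho>^(2^m) * norm N^(2^m)"
      using r0 by (intro mult_left_mono norm_power_ineq) simp
    also have "\<dots> = (\<rho> * norm N)^(2^m)" by (simp add: power_mult_distrib)
    also have "\<dots> \<le> 1" using r0 r1 by (intro power_le_one) simp_all
    finally show "\<rho>^(2^m) * norm (N^(2^m)) \<le> 1" .
  qed
  then show ?thesis unfolding good_def \<rho>_def[symmetric] by (intro exI[of _ 1]) auto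
qed

lemma good_step:
  assumes q: "quasinilpotent N"
    and Lip: "\<forall>z w. cmod z \<le> rs + 1 \<longrightarrow> cmod w \<le> rs + 1 \<longrightarrow> norm (R N w - R N z) \<le> cmod (w - z) * L"
    and d0: "\<delta> > 0" and d1: "\<delta> \<le> 1" and d2: "2 * \<delta> \<le> \<rho>" and dL: "16 * \<delta> * L \<le> 1"
    and rho: "\<rho> \<le> rs" and g: "good N \<rho>"
  shows "good N (\<rho> + \<delta>)"
proof -
  define r where "r = \<rho> + \<delta>"
  define t where "t = (\<rho> - \<delta>) / (\<rho> + \<delta>)"
  define tc where "tc = complex_of_real t"
  have rp: "\<rho> > 0" using d0 d2 by linarith
  have r0: "r > 0" unfolding r_def using rp d0 by simp
  have t0: "t \<ge> 0" unfolding t_def using d0 d2 by simp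
  have tr: "t * r = \<rho> - \<delta>" unfolding t_def r_def using r0 r_def by simp
  have h1: "\<forall>w. cmod w = r \<longrightarrow> norm (R N w - R N (tc*w)) \<le> 1/8"
  proof (intro allI impI)
    fix w assume w: "cmod w = r"
    have c1: "cmod w \<le> rs + 1" using w rho d1 unfolding r_def by simp
    have c2: "cmod (tc * w) \<le> rs + 1" using w tr t0 rho d0 unfolding tc_def by (simp add: norm_mult)
    have "cmod (tc * w - w) = cmod ((tc - 1) * w)" by (simp add: algebra_simps)
    also have "\<dots> = (1 - t) * r"
    proof -
      have t1: "t \<le> 1" unfolding t_def using d0 rp by simp
      have "tc - 1 = complex_of_real (t - 1)" unfolding tc_def by simp
      then have "cmod (tc - 1) = 1 - t" using t1 by (simp only: norm_of_real)
      then show ?thesis using w by (simp add: norm_mult)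
    qed
    also have "\<dots> = 2 * \<delta>" using tr unfolding r_def by (simp add: algebra_simps)
    finally have cd: "cmod (tc * w - w) = 2 * \<delta>" .
    have "norm (R N w - R N (tc*w)) = norm (R N (tc*w) - R N w)" by (rule norm_minus_commute)
    also have "\<dots> \<le> cmod (tc * w - w) * L" using Lip c1 c2 by blast
    also have "\<dots> = 2 * \<delta> * L" using cd by simp
    also have "\<dots> \<le> 1/8" using dL by simp
    finally show "norm (R N w - R N (tc*w)) \<le> 1/8" .
  qed
  define z where "z = complex_of_real r"
  have zr: "cmod z = r" unfolding z_def using r0 by simp
  have h2: "norm (S N m z - S N m (tc * z)) \<le> 1/8" for m
    using S_lip[OF h1 zr] .
  obtain C m0 where C: "C > 0" "\<forall>m\<ge>m0. \<rho>^(2^m) * norm (N^(2^m)) \<le> C"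
    using g unfolding good_def by blast
  define q0 where "q0 = (\<rho> - \<delta>) / \<rho>"
  have q00: "q0 \<ge> 0" and q01: "q0 < 1" unfolding q0_def using rp d0 d2 by simp_all
  obtain m1 where m1: "\<forall>m\<ge>m1. q0^(2^m) < 1/(16*C)"
    using pow2_small[OF q00 q01, of "1/(16*C)"] C by auto
  have "\<forall>m\<ge>max m0 m1. r^(2^m) * norm (N^(2^m)) \<le> 1/3"
  proof (intro allI impI)
    fix m assume m: "m \<ge> max m0 m1"
    define k where "k = (2::nat)^m"
    define W where "W = scaleC ((tc*z)^k) 1 * N^k"
    have SW: "S N m (tc*z) * (1 - W) = 1" unfolding W_def k_def by (rule S_left[OF q])
    have "norm W = (\<rho> - \<delta>)^k * norm (N^k)" unfolding W_def norm_csm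
      using tr t0 r0 unfolding tc_def z_def by (simp add: norm_mult norm_power abs_if)
    also have "(\<rho> - \<delta>)^k = q0^k * \<rho>^k" unfolding q0_def using rp
      by (simp add: power_divide)
    finally have "norm W = q0^k * (\<rho>^k * norm (N^k))" by (simp add: mult_ac)
    also have "\<dots> \<le> q0^k * C" using C m q00 unfolding k_def by (intro mult_left_mono) auto
    also have "\<dots> \<le> 1/(16*C) * C" using m1 m C unfolding k_def by (intro mult_right_mono) auto
    also have "\<dots> = 1/16" using C by simp
    finally have "norm W \<le> 1/16" .
    then have a: "norm (S N m (tc*z) - 1) \<le> 1/8" using linv_small[OF SW] by simp
    have b: "norm (S N m z - 1) \<le> 1/4"
      using norm_triangle_le[of "S N m z - S N m (tc*z)" "S N m (tc*z) - 1" "1/4"] a h2[of m] by simp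
    define T where "T = scaleC (z^k) 1 * N^k"
    have ST: "S N m z * (1 - T) = 1" unfolding T_def k_def by (rule S_left[OF q])
    have "norm T = r^k * norm (N^k)" unfolding T_def norm_csm using zr by (simp add: norm_power)
    then show "r^(2^m) * norm (N^(2^m)) \<le> 1/3" using linv_T[OF ST b] unfolding k_def by simp
  qed
  then have H: "\<forall>m\<ge>max m0 m1. (\<rho> + \<delta>)^(2^m) * norm (N^(2^m)) \<le> 1/3" unfolding r_def .
  show ?thesis unfolding good_def
    by (intro exI[of _ "1/3"] conjI exI[of _ "max m0 m1"] H) simp
qed

lemma good_all:
  assumes q: "quasinilpotent N" and rs: "rs > 0"
  shows "good N rs"
proof -
  define \<rho>i where "\<rho>i = 1 / (norm N + 1)"
  have ri: "\<rho>i > 0" unfolding \<rho>i_def using norm_p1[of N] by simp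
  obtain M where M: "\<forall>z. cmod z \<le> rs + 1 \<longrightarrow> norm (R N z) \<le> M"
    using R_bounded[OF q] by blast
  have "norm (R N 0) \<le> M" using M rs by simp
  then have M0: "M \<ge> 0" using norm_ge_zero[of "R N 0"] by linarith
  define L where "L = M * M * norm N + 1"
  have "M * M * norm N \<ge> 0" using M0 by simp
  then have L0: "L > 0" unfolding L_def by linarith
  have Lip: "\<forall>z w. cmod z \<le> rs + 1 \<longrightarrow> cmod w \<le> rs + 1 \<longrightarrow> norm (R N w - R N z) \<le> cmod (w - z) * L"
  proof (intro allI impI)
    fix z w assume z: "cmod z \<le> rs + 1" and w: "cmod w \<le> rs + 1"
    have "norm (R N w - R N z) \<le> cmod (w - z) * (norm N * norm (R N z) * norm (R N w))"
      using R_diff_norm[OF q, of w z] by (simp add: mult_ac)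
    also have "\<dots> \<le> cmod (w - z) * (norm N * M * M)"
      using M z w M0 by (intro mult_left_mono mult_mono) auto
    also have "\<dots> \<le> cmod (w - z) * L" unfolding L_def by (intro mult_left_mono) (auto simp: mult_ac)
    finally show "norm (R N w - R N z) \<le> cmod (w - z) * L" .
  qed
  define \<delta> where "\<delta> = min 1 (min (\<rho>i/2) (1/(16*L)))"
  have d0: "\<delta> > 0" unfolding \<delta>_def using ri L0 by simp
  have d1: "\<delta> \<le> 1" unfolding \<delta>_def by simp
  have d2: "2 * \<delta> \<le> \<rho>i" unfolding \<delta>_def by simp
  have dL: "16 * \<delta> * L \<le> 1"
  proof -
    have "\<delta> \<le> 1/(16*L)" unfolding \<delta>_def by simp
    then have "\<delta> * (16 * L) \<le> 1/(16*L) * (16 * L)" using L0 by (intro mult_right_mono) auto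
    then show ?thesis using L0 by (simp add: mult_ac)
  qed
  have ind: "good N (min (\<rho>i + real k * \<delta>) rs)" for k
  proof (induction k)
    case 0
    show ?case using good_mono[OF good_init[of N]] ri rs unfolding \<rho>i_def[symmetric] by simp
  next
    case (Suc k)
    show ?case
    proof (cases "\<rho>i + real k * \<delta> \<ge> rs")
      case True
      moreover have "\<rho>i + real (Suc k) * \<delta> = \<rho>i + real k * \<delta> + \<delta>" by (simp add: algebra_simps)
      ultimately have "min (\<rho>i + real (Suc k) * \<delta>) rs = rs" using d0 by linarith
      moreover have "min (\<rho>i + real k * \<delta>) rs = rs" using True by simp
      ultimately have "min (\<rho>i + real (Suc k) * \<delta>) rs = min (\<rho>i + real k * \<delta>) rs" by simp
      then show ?thesis using Suc by simp
    next
      case False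
      then have e: "min (\<rho>i + real k * \<delta>) rs = \<rho>i + real k * \<delta>" by simp
      have gk: "good N (\<rho>i + real k * \<delta>)" using Suc e by simp
      have kd: "real k * \<delta> \<ge> 0" using d0 by simp
      have "good N (\<rho>i + real k * \<delta> + \<delta>)"
        using good_step[OF q Lip d0 d1 _ dL _ gk] d2 kd False by simp
      have "\<rho>i + real (Suc k) * \<delta> = \<rho>i + real k * \<delta> + \<delta>" by (simp add: algebra_simps)
      then have "good N (\<rho>i + real (Suc k) * \<delta>)" using \<open>good N (\<rho>i + real k * \<delta> + \<delta>)\<close> by (simp only:)
      moreover have "0 \<le> min (\<rho>i + real (Suc k) * \<delta>) rs" using ri kd d0 rs by simp
      ultimately show ?thesis by (rule good_mono) simp
    qed
  qed
  obtain k where k: "rs < real k * \<delta>" using reals_Archimedean3[OF d0] by blast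
  have "min (\<rho>i + real k * \<delta>) rs = rs" using k ri by simp
  then show ?thesis using ind[of k] by simp
qed

lemma zero_by_good:
  assumes q: "quasinilpotent N"
    and h: "\<forall>k\<ge>1. norm (e::'a::complex_banach_algebra_1) \<le> norm x ^ k * norm (N^k)"
  shows "e = 0"
proof (rule ccontr)
  assume "e \<noteq> 0"
  then have e0: "norm e > 0" by simp
  define rs where "rs = norm x + 1"
  have rs0: "rs > 0" unfolding rs_def by (simp add: add_nonneg_pos)
  obtain C m0 where C: "C > 0" "\<forall>m\<ge>m0. rs^(2^m) * norm (N^(2^m)) \<le> C"
    using good_all[OF q rs0] unfolding good_def by blast
  define q0 where "q0 = norm x / rs"
  have q00: "q0 \<ge> 0" and q01: "q0 < 1" unfolding q0_def rs_def using norm_p1[of x] by (simp_all add: field_simps)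
  obtain m1 where m1: "\<forall>m\<ge>m1. q0^(2^m) < norm e / C"
    using pow2_small[OF q00 q01, of "norm e / C"] C e0 by auto
  define m where "m = max m0 m1"
  define k where "k = (2::nat)^m"
  have hk: "k \<ge> 1" unfolding k_def by simp
  have "norm e \<le> norm x ^ k * norm (N^k)" using h hk by blast
  also have "norm x ^ k = q0^k * rs^k"
  proof -
    have "norm x = q0 * rs" unfolding q0_def using rs0 by simp
    then show ?thesis by (simp only: power_mult_distrib)
  qed
  also have "q0^k * rs^k * norm (N^k) = q0^k * (rs^k * norm (N^k))" by (simp add: mult_ac)
  also have "\<dots> \<le> q0^k * C" using C q00 unfolding k_def m_def by (intro mult_left_mono) auto
  also have "\<dots> < norm e / C * C" using m1 C unfolding k_def m_def by (intro mult_strict_right_mono) auto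
  also have "\<dots> = norm e" using C by simp
  finally show False by simp
qed

lemma pow_comm: "(a::'a::monoid_mult) * b = b * a \<Longrightarrow> a^n * b = b * a^n"
proof (induction n)
  case 0 then show ?case by simp
next
  case (Suc n)
  have "a^Suc n * b = a * (a^n * b)" by (simp add: mult.assoc)
  also have "\<dots> = a * (b * a^n)" using Suc by simp
  also have "\<dots> = b * a^Suc n" using Suc.prems by (simp add: mult.assoc[symmetric])
  finally show ?case .
qed

lemma pow_mult_comm: "(a::'a::monoid_mult) * b = b * a \<Longrightarrow> (a * b)^n = a^n * b^n"
proof (induction n)
  case 0 then show ?case by simp
next
  case (Suc n)
  have "(a * b)^Suc n = a * b * (a^n * b^n)" using Suc by simp
  also have "\<dots> = a * (b * a^n) * b^n" by (simp add: mult.assoc)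
  also have "\<dots> = a * (a^n * b) * b^n" using pow_comm[OF Suc.prems, of n] by simp
  also have "\<dots> = a^Suc n * b^Suc n" by (simp add: mult.assoc power_commutes)
  finally show ?case .
qed

lemma idem_pow: "(e::'a::monoid_mult) * e = e \<Longrightarrow> n \<ge> 1 \<Longrightarrow> e^n = e"
proof (induction n)
  case 0 then show ?case by simp
next
  case (Suc n)
  show ?case
  proof (cases "n = 0")
    case True then show ?thesis by simp
  next
    case False then show ?thesis using Suc by simp
  qed
qed

lemma gd_half:
  fixes a x y :: "'a::complex_banach_algebra_1"
  assumes hx: "is_gd_inverse a x" and hy: "is_gd_inverse a y"
  shows "(a*x) * (1 - a*y) = 0 \<and> (1 - a*y) * (a*x) = 0"
proof -
  have xax: "x * a * x = x" and xa: "a * x = x * a" using hx unfolding is_gd_inverse_def by auto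
  have yay: "y * a * y = y" and ya: "a * y = y * a" and qn: "quasinilpotent (a - a^2 * y)"
    using hy unfolding is_gd_inverse_def by auto
  define p where "p = a * x"
  define r where "r = a * y"
  define N where "N = a - a^2 * y"
  have qN: "quasinilpotent N" using qn unfolding N_def .
  have pp: "p * p = p" unfolding p_def by (metis xa xax mult.assoc)
  have rr: "r * r = r" unfolding r_def by (metis ya yay mult.assoc)
  have ar: "a * r = r * a" unfolding r_def by (metis ya mult.assoc)
  have a1r: "a * (1 - r) = (1 - r) * a" using ar by (simp add: algebra_simps)
  have Na: "N = a * (1 - r)" unfolding N_def r_def by (simp add: power2_eq_square algebra_simps mult.assoc)
  have Nb: "N = (1 - r) * a" using Na a1r by simp
  have ee: "(1 - r) * (1 - r) = 1 - r" using rr by (simp add: algebra_simps)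
  have pxa: "p = x * a" unfolding p_def using xa .
  have bound: "\<forall>k\<ge>1. norm (e::'a) \<le> norm x ^ k * norm (N^k)"
    if E: "\<And>k. k \<ge> 1 \<Longrightarrow> e = x^k * N^k \<or> e = N^k * x^k" for e
  proof (intro allI impI)
    fix k :: nat assume k: "k \<ge> 1"
    have "norm (x^k * N^k) \<le> norm x ^ k * norm (N^k)"
      using norm_mult_ineq[of "x^k" "N^k"] norm_power_ineq[of x k]
      by (meson mult_right_mono norm_ge_zero order_trans)
    moreover have "norm (N^k * x^k) \<le> norm x ^ k * norm (N^k)"
      using norm_mult_ineq[of "N^k" "x^k"] norm_power_ineq[of x k]
      by (metis mult.commute mult_left_mono norm_ge_zero order_trans)
    ultimately show "norm e \<le> norm x ^ k * norm (N^k)" using E[OF k] by auto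
  qed
  have pk: "x^k * a^k = p" if "k \<ge> 1" for k
  proof -
    have "x^k * a^k = (x * a)^k" using pow_mult_comm[of x a k] xa by simp
    also have "\<dots> = p" using idem_pow[OF pp that] pxa by simp
    finally show ?thesis .
  qed
  have pk2: "a^k * x^k = p" if "k \<ge> 1" for k
  proof -
    have "a^k * x^k = (a * x)^k" using pow_mult_comm[of a x k] xa by simp
    also have "\<dots> = p" using idem_pow[OF pp that] p_def by simp
    finally show ?thesis .
  qed
  have Nk1: "N^k = a^k * (1 - r)" if "k \<ge> 1" for k
    using pow_mult_comm[OF a1r, of k] idem_pow[OF ee that] Na by simp
  have Nk2: "N^k = (1 - r) * a^k" if "k \<ge> 1" for k
    using pow_mult_comm[OF a1r[symmetric], of k] idem_pow[OF ee that] Nb by simp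
  have e1: "p * (1 - r) = x^k * N^k" if "k \<ge> 1" for k
    using Nk1[OF that] pk[OF that] by (simp add: mult.assoc[symmetric])
  have e2: "(1 - r) * p = N^k * x^k" if "k \<ge> 1" for k
    using Nk2[OF that] pk2[OF that] by (simp add: mult.assoc)
  have z1: "p * (1 - r) = 0" using zero_by_good[OF qN bound] e1 by blast
  have z2: "(1 - r) * p = 0" using zero_by_good[OF qN bound] e2 by blast
  show ?thesis using z1 z2 unfolding p_def r_def by blast
qed

lemma gd_unique:
  fixes a x y :: "'a::complex_banach_algebra_1"
  assumes hx: "is_gd_inverse a x" and hy: "is_gd_inverse a y"
  shows "x = y"
proof -
  have xax: "x * a * x = x" and xa: "a * x = x * a" using hx unfolding is_gd_inverse_def by auto
  have yay: "y * a * y = y" and ya: "a * y = y * a" using hy unfolding is_gd_inverse_def by auto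
  define p where "p = a * x"
  define r where "r = a * y"
  have h1: "p * (1 - r) = 0" "(1 - r) * p = 0" using gd_half[OF hx hy] unfolding p_def r_def by auto
  have h2: "r * (1 - p) = 0" "(1 - p) * r = 0" using gd_half[OF hy hx] unfolding p_def r_def by auto
  have "p = p * r" using h1(1) by (simp add: algebra_simps)
  moreover have "r = p * r" using h2(2) by (simp add: algebra_simps)
  ultimately have pr: "p = r" by simp
  have "x = x * p" unfolding p_def using xax by (simp add: mult.assoc)
  also have "\<dots> = x * r" using pr by simp
  also have "\<dots> = p * y" unfolding r_def p_def using xa by (simp add: mult.assoc)
  also have "\<dots> = r * y" using pr by simp
  also have "\<dots> = y" unfolding r_def using ya yay by simp
  finally show ?thesis .
qed

lemma corner_inv:
  fixes y v p :: "'a::complex_banach_algebra_1"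
  assumes yv: "y * v = 1" and vy: "v * y = 1" and yp: "y * p = p * y" and pp: "p * p = p" and c: "c \<noteq> 0"
  shows "invertible_elem (y * (1 - p) - scaleC c 1 * p)"
proof -
  define e where "e = 1 - p"
  define s where "s = (scaleC c 1 :: 'a)"
  define s' where "s' = (scaleC (inverse c) 1 :: 'a)"
  have ss: "s * s' = 1" unfolding s_def s'_def using cs_inv[OF c] .
  have ss': "s' * s = 1" using ss unfolding s_def s'_def by (simp add: cs_comm[of c])
  have sc: "\<And>z. s * z = z * s" unfolding s_def by (rule cs_comm)
  have sc': "\<And>z. s' * z = z * s'" unfolding s'_def by (rule cs_comm)
  have vp: "v * p = p * v"
  proof -
    have "v * p = v * p * (y * v)" using yv by simp
    also have "\<dots> = v * (p * y) * v" by (simp add: mult.assoc)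
    also have "\<dots> = v * (y * p) * v" using yp by simp
    also have "\<dots> = (v * y) * p * v" by (simp add: mult.assoc)
    finally show ?thesis using vy by simp
  qed
  have ee: "e * e = e" unfolding e_def using pp by (simp add: algebra_simps)
  have ep: "e * p = 0" unfolding e_def using pp by (simp add: algebra_simps)
  have pe: "p * e = 0" unfolding e_def using pp by (simp add: algebra_simps)
  have ye: "y * e = e * y" unfolding e_def using yp by (simp add: algebra_simps)
  have ve: "v * e = e * v" unfolding e_def using vp by (simp add: algebra_simps)
  have ep1: "e + p = 1" unfolding e_def by simp
  define w where "w = v * e - s' * p"
  have "(y * e - s * p) * w = y * e * (v * e) - y * e * (s' * p) - s * p * (v * e) + s * p * (s' * p)"
    unfolding w_def by (simp add: algebra_simps)
  also have "y * e * (v * e) = e"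
    by (metis ee ve yv mult.assoc mult_1_left)
  also have "y * e * (s' * p) = 0"
    by (metis ep sc' mult.assoc mult_zero_left mult_zero_right)
  also have "s * p * (v * e) = 0"
    by (metis pe vp mult.assoc mult_zero_right)
  also have "s * p * (s' * p) = p"
    by (metis pp sc ss' mult.assoc mult_1_left)
  finally have l: "(y * e - s * p) * w = 1" using ep1 by simp
  have "w * (y * e - s * p) = v * e * (y * e) - v * e * (s * p) - s' * p * (y * e) + s' * p * (s * p)"
    unfolding w_def by (simp add: algebra_simps)
  also have "v * e * (y * e) = e"
    by (metis ee ye vy mult.assoc mult_1_left)
  also have "v * e * (s * p) = 0"
    by (metis ep sc mult.assoc mult_zero_left mult_zero_right)
  also have "s' * p * (y * e) = 0"
    by (metis pe yp mult.assoc mult_zero_right)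
  also have "s' * p * (s * p) = p"
    by (metis pp sc' ss mult.assoc mult_1_left)
  finally have r: "w * (y * e - s * p) = 1" using ep1 by simp
  show ?thesis unfolding invertible_elem_def using l r unfolding e_def s_def by blast
qed

lemma gpi_gd:
  fixes a x :: "'a::complex_banach_algebra_1"
  assumes h: "is_gpi_hirano_inverse a x"
  shows "is_gd_inverse a x"
proof -
  have xax: "x * a * x = x" and xa: "a * x = x * a" using h unfolding is_gpi_hirano_inverse_def by auto
  obtain n :: nat where qu: "quasinilpotent (a - a^(n+2) * x)"
    using h unfolding is_gpi_hirano_inverse_def by auto
  define u where "u = a - a^(n+2) * x"
  define p where "p = a * x"
  define q where "q = a - a^2 * x"
  have qU: "quasinilpotent u" using qu unfolding u_def .
  have pp: "p * p = p" unfolding p_def by (metis xa xax mult.assoc)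
  have pa: "p * a = a * p" unfolding p_def by (metis xa mult.assoc)
  have xp: "x * p = x" unfolding p_def using xax by (simp add: mult.assoc)
  have px: "p * x = x" unfolding p_def using xax xa by simp
  have pan: "p * a^(n+2) = a^(n+2) * p" using pow_comm[OF pa[symmetric], of "n+2"] by (rule sym)
  have up: "u * p = a * p - a^(n+2) * x" unfolding u_def using xp by (simp add: algebra_simps mult.assoc)
  have pu: "p * u = a * p - a^(n+2) * x"
  proof -
    have "p * u = p * a - p * a^(n+2) * x" unfolding u_def by (simp add: right_diff_distrib mult.assoc)
    also have "p * a^(n+2) * x = a^(n+2) * p * x" by (simp only: pan)
    also have "\<dots> = a^(n+2) * x" using px by (simp add: mult.assoc)
    finally show ?thesis using pa by simp
  qed
  have upc: "u * p = p * u" using up pu by simp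
  have qu1: "q = u * (1 - p)"
  proof -
    have "u * (1 - p) = u - u * p" by (simp add: algebra_simps)
    also have "\<dots> = u - (a * p - a^(n+2) * x)" using up by simp
    also have "\<dots> = a - a * p" unfolding u_def by simp
    also have "\<dots> = q" unfolding q_def p_def by (simp add: power2_eq_square mult.assoc)
    finally show ?thesis by simp
  qed
  have nz: "invertible_elem (q - scaleC z 1)" if z: "z \<noteq> 0" for z
  proof -
    obtain v where yv: "(u - scaleC z 1) * v = 1" and vy: "v * (u - scaleC z 1) = 1"
      using qn_D1[OF qU z] unfolding invertible_elem_def by blast
    have yp: "(u - scaleC z 1) * p = p * (u - scaleC z 1)"
      using upc cs_comm[of z p] by (simp add: algebra_simps)
    have "q - scaleC z 1 = (u - scaleC z 1) * (1 - p) - scaleC z 1 * p"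
      unfolding qu1 by (simp add: algebra_simps)
    then show ?thesis using corner_inv[OF yv vy yp pp z] by simp
  qed
  have z0: "\<not> invertible_elem q"
  proof
    assume "invertible_elem q"
    then obtain w where qw: "q * w = 1" and wq: "w * q = 1" unfolding invertible_elem_def by blast
    have qp: "q * p = 0" unfolding qu1 using pp by (simp add: algebra_simps mult.assoc)
    have "p = w * q * p" using wq by simp
    also have "\<dots> = 0" using qp by (simp add: mult.assoc)
    finally have p0: "p = 0" .
    have x0: "x = 0" using xp p0 by simp
    have "u = q" unfolding u_def q_def x0 by simp
    then show False using qn_D2[OF qU] \<open>invertible_elem q\<close> by simp
  qed
  have "spectrum q = {0}"
  proof -
    have "\<And>z. z \<in> spectrum q \<longleftrightarrow> z = 0"
      unfolding spectrum_def using nz z0 by auto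
    then show ?thesis by auto
  qed
  then show ?thesis unfolding is_gd_inverse_def quasinilpotent_def q_def using xax xa by simp
qed

theorem proposition2p1:
  fixes a x :: "'a::complex_banach_algebra_1"
  assumes "is_gpi_hirano_inverse a x"
  shows "gd_invertible a \<and> gd_inverse a = x"
proof -
  have g: "is_gd_inverse a x" using gpi_gd[OF assms] .
  have "gd_inverse a = x" unfolding gd_inverse_def
    by (rule the_equality[where P = "is_gd_inverse a", OF g]) (rule gd_unique[OF _ g])
  then show ?thesis using g unfolding gd_invertible_def by blast
qed

end
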